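(* Let $R\subseteq S_n$ be a top-$k$ partial ranking, $\sigma\in R$ and $\tau\in S_n$. Then $d(\sigma,\tau)=d(\sigma,\Pi_R(\tau))+d(\Pi_R(\tau),\tau)$.
   Context: $S_n$ is the symmetric group on $[n]$; $\sigma\in S_n$ is identified with the full ranking $\sigma(1)\succ\cdots\succ\sigma(n)$. For distinct items $x,y$, $\{x,y\}$ is discordant for $\sigma,\tau$ if $(\sigma^{-1}(x)-\sigma^{-1}(y))(\tau^{-1}(x)-\tau^{-1}(y))<0$. The Kendall distance $d(\sigma,\tau)$ is the number of unordered discordant pairs. For $0\le k\le n$ and distinct $a_1,\dots,a_k\in[n]$, the top-$k$ partial ranking is the set $R=\{\sigma\in S_n:\sigma(i)=a_i,\ i\le k\}$. For $\tau\in S_n$, $\Pi_R(\tau)$ denotes the unique element of $R$ minimising $\rho\mapsto d(\rho,\tau)$ over $\rho\in R$ (this minimiser exists and is unique). *)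

theory Defs
  imports "HOL-Combinatorics.Permutations"
begin

text \<open>S_n: permutations of {1..n}. A permutation sigma is read as the ranking
  sigma(1) > ... > sigma(n); the position of item x is (inv sigma) x.\<close>

definition Sn :: "nat \<Rightarrow> (nat \<Rightarrow> nat) set" where
  "Sn n = {\<sigma>. \<sigma> permutes {1..n}}"

definition discordant :: "(nat \<Rightarrow> nat) \<Rightarrow> (nat \<Rightarrow> nat) \<Rightarrow> nat \<Rightarrow> nat \<Rightarrow> bool" where
  "discordant \<sigma> \<tau> x y \<longleftrightarrow>
     (int (inv \<sigma> x) - int (inv \<sigma> y)) * (int (inv \<tau> x) - int (inv \<tau> y)) < 0"

definition kendall :: "nat \<Rightarrow> (nat \<Rightarrow> nat) \<Rightarrow> (nat \<Rightarrow> nat) \<Rightarrow> nat" where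
  "kendall n \<sigma> \<tau> = card {(x, y). x \<in> {1..n} \<and> y \<in> {1..n} \<and> x < y \<and> discordant \<sigma> \<tau> x y}"

definition topk :: "nat \<Rightarrow> nat \<Rightarrow> (nat \<Rightarrow> nat) \<Rightarrow> (nat \<Rightarrow> nat) set" where
  "topk n k a = {\<sigma> \<in> Sn n. \<forall>i\<in>{1..k}. \<sigma> i = a i}"

definition proj :: "nat \<Rightarrow> (nat \<Rightarrow> nat) set \<Rightarrow> (nat \<Rightarrow> nat) \<Rightarrow> (nat \<Rightarrow> nat)" where
  "proj n R \<tau> = (THE \<rho>. \<rho> \<in> R \<and> (\<forall>\<rho>'\<in>R. kendall n \<rho> \<tau> \<le> kendall n \<rho>' \<tau>))"

end

theory Submission
  imports Defs
begin

lemma Sn_inv_inj: "\<sigma> \<in> Sn n \<Longrightarrow> inv \<sigma> x = inv \<sigma> y \<Longrightarrow> x = y"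
  unfolding Sn_def by (metis mem_Collect_eq permutes_inverses(1))

lemma topk_A: "\<sigma> \<in> topk n k a \<Longrightarrow> i \<in> {1..k} \<Longrightarrow> inv \<sigma> (a i) = i"
  unfolding topk_def Sn_def using permutes_inv_eq by fastforce

lemma topk_B:
  assumes "\<sigma> \<in> topk n k a" "x \<in> {1..n}" "x \<notin> a ` {1..k}"
  shows "k < inv \<sigma> x \<and> inv \<sigma> x \<le> n"
proof -
  have p: "\<sigma> permutes {1..n}" using assms(1) unfolding topk_def Sn_def by auto
  have "inv \<sigma> x \<in> {1..n}" using permutes_in_image[OF permutes_inv[OF p]] assms(2) by blast
  moreover have "\<not> inv \<sigma> x \<le> k"
  proof
    assume "inv \<sigma> x \<le> k"
    with \<open>inv \<sigma> x \<in> {1..n}\<close> have i: "inv \<sigma> x \<in> {1..k}" by auto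
    then have "\<sigma> (inv \<sigma> x) = a (inv \<sigma> x)" using assms(1) unfolding topk_def by auto
    then have "x = a (inv \<sigma> x)" using permutes_inverses(1)[OF p] by simp
    with i assms(3) show False by auto
  qed
  ultimately show ?thesis by auto
qed

lemma sign_lemma:
  fixes u v w :: int
  assumes "u \<noteq> 0" "v \<noteq> 0" "w \<noteq> 0" "\<not> (u*v<0 \<and> v*w<0)"
  shows "(u*w<0) = (u*v<0 \<or> v*w<0)"
  using assms by (auto simp: mult_less_0_iff)

lemma core:
  assumes s: "\<sigma> \<in> topk n k a" and r: "\<rho> \<in> topk n k a" and t: "\<tau> \<in> Sn n"
    and agree: "\<forall>x\<in>{1..n} - a`{1..k}. \<forall>y\<in>{1..n} - a`{1..k}. inv \<rho> x < inv \<rho> y \<longrightarrow> inv \<tau> x < inv \<tau> y"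
  shows "kendall n \<sigma> \<tau> = kendall n \<sigma> \<rho> + kendall n \<rho> \<tau>"
proof -
  have sS: "\<sigma> \<in> Sn n" and rS: "\<rho> \<in> Sn n" using s r unfolding topk_def by auto
  have key: "(discordant \<sigma> \<tau> x y = (discordant \<sigma> \<rho> x y \<or> discordant \<rho> \<tau> x y))
     \<and> \<not> (discordant \<sigma> \<rho> x y \<and> discordant \<rho> \<tau> x y)"
    if xy: "x \<in> {1..n}" "y \<in> {1..n}" "x < y" for x y
  proof -
    define u where "u = int (inv \<sigma> x) - int (inv \<sigma> y)"
    define v where "v = int (inv \<rho> x) - int (inv \<rho> y)"
    define w where "w = int (inv \<tau> x) - int (inv \<tau> y)"
    have nz: "u \<noteq> 0" "v \<noteq> 0" "w \<noteq> 0"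
      unfolding u_def v_def w_def using Sn_inv_inj[OF sS] Sn_inv_inj[OF rS] Sn_inv_inj[OF t] xy(3)
      by (metis eq_iff_diff_eq_0 less_irrefl of_nat_eq_iff)+
    have nb: "\<not> (u*v<0 \<and> v*w<0)"
    proof (cases "x \<in> a`{1..k}")
      case xA: True
      then obtain i where i: "i \<in> {1..k}" "x = a i" by auto
      show ?thesis
      proof (cases "y \<in> a`{1..k}")
        case True
        then obtain j where j: "j \<in> {1..k}" "y = a j" by auto
        have "u = v" unfolding u_def v_def using topk_A[OF s] topk_A[OF r] i j by simp
        then show ?thesis by (simp add: mult_less_0_iff)
      next
        case False
        have "u < 0" "v < 0" unfolding u_def v_def
          using topk_A[OF s i(1)] topk_A[OF r i(1)] topk_B[OF s xy(2) False] topk_B[OF r xy(2) False] i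
          by auto
        then show ?thesis by (simp add: mult_less_0_iff)
      qed
    next
      case xB: False
      show ?thesis
      proof (cases "y \<in> a`{1..k}")
        case True
        then obtain j where j: "j \<in> {1..k}" "y = a j" by auto
        have "u > 0" "v > 0" unfolding u_def v_def
          using topk_A[OF s j(1)] topk_A[OF r j(1)] topk_B[OF s xy(1) xB] topk_B[OF r xy(1) xB] j
          by auto
        then show ?thesis by (simp add: mult_less_0_iff)
      next
        case False
        have "v*w > 0"
        proof (cases "inv \<rho> x < inv \<rho> y")
          case True
          then have "inv \<tau> x < inv \<tau> y" using agree xy xB False by auto
          with True show ?thesis unfolding v_def w_def by (simp add: zero_less_mult_iff)
        next
          case c: False
          then have "inv \<rho> y < inv \<rho> x" using nz(2) unfolding v_def by auto
          then have "inv \<tau> y < inv \<tau> x" using agree xy xB False by auto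
          with c show ?thesis unfolding v_def w_def using nz(2) v_def
            by (simp add: zero_less_mult_iff)
        qed
        then show ?thesis by auto
      qed
    qed
    show ?thesis
      using sign_lemma[OF nz nb] nb unfolding discordant_def u_def v_def w_def by auto
  qed
  define D where "D f g = {(x, y). x \<in> {1..n} \<and> y \<in> {1..n} \<and> x < y \<and> discordant f g x y}" for f g
  have fin: "finite (D f g)" for f g
    by (rule finite_subset[of _ "{1..n} \<times> {1..n}"]) (auto simp: D_def)
  have un: "D \<sigma> \<tau> = D \<sigma> \<rho> \<union> D \<rho> \<tau>" unfolding D_def using key by auto
  have dj: "D \<sigma> \<rho> \<inter> D \<rho> \<tau> = {}" unfolding D_def using key by auto
  show ?thesis unfolding kendall_def D_def[symmetric] un using card_Un_disjoint[OF fin fin dj] by simp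
qed

lemma disc_sym: "discordant f g x y = discordant f g y x"
proof -
  have "(int (inv f x) - int (inv f y)) * (int (inv g x) - int (inv g y)) =
        (int (inv f y) - int (inv f x)) * (int (inv g y) - int (inv g x))"
    by (simp add: algebra_simps)
  then show ?thesis unfolding discordant_def by simp
qed

lemma count_pos:
  assumes g: "g permutes {1..n}" and x: "x \<in> {1..(n::nat)}"
  shows "card {y\<in>{1..n}. g y \<le> g x} = g x"
proof -
  have gx: "g x \<in> {1..n}" using permutes_in_image[OF g] x by blast
  have e: "g ` {y\<in>{1..n}. g y \<le> g x} = {1..g x}"
  proof
    show "g ` {y\<in>{1..n}. g y \<le> g x} \<subseteq> {1..g x}"
    proof
      fix z assume "z \<in> g ` {y\<in>{1..n}. g y \<le> g x}"
      then obtain y where y: "y \<in> {1..n}" "g y \<le> g x" "z = g y" by blast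
      have "g y \<in> {1..n}" using permutes_in_image[OF g] y(1) by blast
      then show "z \<in> {1..g x}" using y by simp
    qed
    show "{1..g x} \<subseteq> g ` {y\<in>{1..n}. g y \<le> g x}"
    proof
      fix p assume p: "p \<in> {1..g x}"
      then have "p \<in> {1..n}" using gx by simp
      then have "p \<in> g ` {1..n}" using permutes_image[OF g] by simp
      then obtain y where "y \<in> {1..n}" "g y = p" by blast
      then show "p \<in> g ` {y\<in>{1..n}. g y \<le> g x}" using p by force
    qed
  qed
  have "inj_on g {y\<in>{1..n}. g y \<le> g x}"
    using permutes_inj_on[OF g] .
  then have "card {y\<in>{1..n}. g y \<le> g x} = card {1..g x}" using card_image e by metis
  then show ?thesis by simp
qed

lemma zero_eq:
  assumes s: "\<sigma> \<in> Sn n" and r: "\<rho> \<in> Sn n" and z: "kendall n \<sigma> \<rho> = 0"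
  shows "\<sigma> = \<rho>"
proof -
  have ps: "\<sigma> permutes {1..n}" and pr: "\<rho> permutes {1..n}" using s r unfolding Sn_def by auto
  have "finite {(x, y). x \<in> {1..n} \<and> y \<in> {1..n} \<and> x < y \<and> discordant \<sigma> \<rho> x y}"
    by (rule finite_subset[of _ "{1..n} \<times> {1..n}"]) auto
  then have emp: "{(x, y). x \<in> {1..n} \<and> y \<in> {1..n} \<and> x < y \<and> discordant \<sigma> \<rho> x y} = {}"
    using z unfolding kendall_def by simp
  have nd: "\<not> discordant \<sigma> \<rho> x y" if "x \<in> {1..n}" "y \<in> {1..n}" for x y
  proof (cases "x < y")
    case True then show ?thesis using emp that by auto
  next
    case False
    show ?thesis
    proof (cases "x = y")
      case True then show ?thesis by (simp add: discordant_def)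
    next
      case False
      with \<open>\<not> x < y\<close> have "y < x" by auto
      then have "\<not> discordant \<sigma> \<rho> y x" using emp that by auto
      then show ?thesis using disc_sym by blast
    qed
  qed
  have ord: "(inv \<sigma> y \<le> inv \<sigma> x) = (inv \<rho> y \<le> inv \<rho> x)" if "x \<in> {1..n}" "y \<in> {1..n}" for x y
  proof (cases "x = y")
    case True then show ?thesis by simp
  next
    case False
    have a: "inv \<sigma> x \<noteq> inv \<sigma> y" using Sn_inv_inj[OF s] False by auto
    have b: "inv \<rho> x \<noteq> inv \<rho> y" using Sn_inv_inj[OF r] False by auto
    have "\<not> (int (inv \<sigma> x) - int (inv \<sigma> y)) * (int (inv \<rho> x) - int (inv \<rho> y)) < 0"
      using nd[OF that] unfolding discordant_def .
    then show ?thesis using a b by (auto simp: mult_less_0_iff)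
  qed
  have "inv \<sigma> x = inv \<rho> x" for x
  proof (cases "x \<in> {1..n}")
    case True
    have "{y\<in>{1..n}. inv \<sigma> y \<le> inv \<sigma> x} = {y\<in>{1..n}. inv \<rho> y \<le> inv \<rho> x}"
      using ord True by auto
    then show ?thesis using count_pos[OF permutes_inv[OF ps] True] count_pos[OF permutes_inv[OF pr] True]
      by simp
  next
    case False
    then show ?thesis using permutes_not_in[OF permutes_inv[OF ps]] permutes_not_in[OF permutes_inv[OF pr]]
      by simp
  qed
  then have "inv \<sigma> = inv \<rho>" by auto
  then show ?thesis using permutes_inv_inv[OF ps] permutes_inv_inv[OF pr] by metis
qed

theorem lemma5:
  fixes n k :: nat and a \<sigma> \<tau> :: "nat \<Rightarrow> nat"
  assumes "k \<le> n"
    and "inj_on a {1..k}" and "a ` {1..k} \<subseteq> {1..n}"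
    and "\<sigma> \<in> topk n k a"
    and "\<tau> \<in> Sn n"
  shows "kendall n \<sigma> \<tau> =
           kendall n \<sigma> (proj n (topk n k a) \<tau>) + kendall n (proj n (topk n k a) \<tau>) \<tau>"
proof -
  define A where "A = a`{1..k}"
  define B where "B = {1..n} - A"
  define C where "C x = {y\<in>B. inv \<tau> y \<le> inv \<tau> x}" for x
  define f where "f x = (if x \<in> {1..n} then (if x \<in> A then inv_into {1..k} a x
                          else k + card (C x)) else x)" for x
  have finB: "finite B" unfolding B_def by auto
  have cardA: "card A = k" unfolding A_def using card_image[OF assms(2)] by simp
  have cardB: "card B = n - k" unfolding B_def
    using card_Diff_subset[of A "{1..n}"] assms(3) cardA unfolding A_def
    by (simp add: finite_subset)
  have CB: "C x \<subseteq> B" for x unfolding C_def by auto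
  have fA: "f x = inv_into {1..k} a x \<and> f x \<in> {1..k}" if "x \<in> A" for x
    using that assms(3) inv_into_into[of x a "{1..k}"] unfolding f_def A_def by auto
  have fB: "k < f x \<and> f x \<le> n" if "x \<in> B" for x
  proof -
    have "x \<in> C x" using that unfolding C_def by auto
    then have "card (C x) \<ge> 1" using finite_subset[OF CB finB]
      by (metis One_nat_def Suc_leI card_gt_0_iff empty_iff)
    moreover have "card (C x) \<le> n - k" using card_mono[OF finB CB] cardB by simp
    moreover have "f x = k + card (C x)" using that unfolding f_def B_def by auto
    ultimately show ?thesis using assms(1) by auto
  qed
  have fBeq: "f x = k + card (C x)" if "x \<in> B" for x using that unfolding f_def B_def by auto
  have fmono: "f y \<le> f x" if "x \<in> B" "y \<in> B" "inv \<tau> y \<le> inv \<tau> x" for x y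
  proof -
    have "C y \<subseteq> C x" using that unfolding C_def by auto
    then show ?thesis using fBeq that card_mono[OF finite_subset[OF CB finB]] by auto
  qed
  have fstrict: "f x < f y" if "x \<in> B" "y \<in> B" "inv \<tau> x < inv \<tau> y" for x y
  proof -
    have "C x \<subseteq> C y" using that unfolding C_def by auto
    moreover have "y \<in> C y" "y \<notin> C x" using that unfolding C_def by auto
    ultimately have "C x \<subset> C y" by blast
    then show ?thesis using fBeq that psubset_card_mono[OF finite_subset[OF CB finB]] by auto
  qed
  have AB: "x \<in> {1..n} \<Longrightarrow> x \<in> A \<or> x \<in> B" for x unfolding B_def by auto
  have img: "f ` {1..n} \<subseteq> {1..n}"
  proof
    fix z assume "z \<in> f ` {1..n}"
    then obtain x where x: "x \<in> {1..n}" "z = f x" by auto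
    then show "z \<in> {1..n}" using AB[OF x(1)] fA fB assms(1) by fastforce
  qed
  have injf: "inj_on f {1..n}"
  proof (rule inj_onI)
    fix x y assume x: "x \<in> {1..n}" and y: "y \<in> {1..n}" and e: "f x = f y"
    show "x = y"
    proof (cases "x \<in> A")
      case True
      show ?thesis
      proof (cases "y \<in> A")
        case True
        with \<open>x \<in> A\<close> e fA show ?thesis unfolding A_def by (metis f_inv_into_f)
      next
        case False
        then have "y \<in> B" using AB y by auto
        then show ?thesis using fA[OF \<open>x \<in> A\<close>] fB[OF \<open>y \<in> B\<close>] e by simp
      qed
    next
      case False
      then have xB: "x \<in> B" using AB x by auto
      show ?thesis
      proof (cases "y \<in> A")
        case True
        then show ?thesis using fA[OF True] fB[OF xB] e by simp
      next
        case False
        then have yB: "y \<in> B" using AB y by auto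
        show ?thesis
        proof (rule ccontr)
          assume "x \<noteq> y"
          then have "inv \<tau> x \<noteq> inv \<tau> y" using Sn_inv_inj[OF assms(5)] by auto
          then have "inv \<tau> x < inv \<tau> y \<or> inv \<tau> y < inv \<tau> x" by auto
          then show False using fstrict[OF xB yB] fstrict[OF yB xB] e by auto
        qed
      qed
    qed
  qed
  have "f ` {1..n} = {1..n}" using endo_inj_surj[OF _ img injf] by simp
  then have "bij_betw f {1..n} {1..n}" using injf by (simp add: bij_betw_def)
  then have fperm: "f permutes {1..n}"
  proof (rule bij_imp_permutes)
    fix x :: nat assume "x \<notin> {1..n}"
    then show "f x = x" unfolding f_def by (rule if_not_P)
  qed
  define \<rho> where "\<rho> = inv f"
  have rperm: "\<rho> permutes {1..n}" unfolding \<rho>_def using permutes_inv[OF fperm] .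
  have invr: "inv \<rho> = f" unfolding \<rho>_def using permutes_inv_inv[OF fperm] .
  have rR: "\<rho> \<in> topk n k a"
    unfolding topk_def Sn_def
  proof (intro CollectI conjI ballI)
    show "\<rho> permutes {1..n}" by (rule rperm)
    fix i assume i: "i \<in> {1..k}"
    have "a i \<in> A" using i unfolding A_def by auto
    then have "f (a i) = i" using fA inv_into_f_f[OF assms(2) i] by simp
    then show "\<rho> i = a i" unfolding \<rho>_def using permutes_inv_eq[OF fperm] by simp
  qed
  have agree: "\<forall>x\<in>{1..n} - a`{1..k}. \<forall>y\<in>{1..n} - a`{1..k}. inv \<rho> x < inv \<rho> y \<longrightarrow> inv \<tau> x < inv \<tau> y"
  proof (intro ballI impI)
    fix x y assume x: "x \<in> {1..n} - a`{1..k}" and y: "y \<in> {1..n} - a`{1..k}" and l: "inv \<rho> x < inv \<rho> y"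
    have xB: "x \<in> B" and yB: "y \<in> B" using x y unfolding B_def A_def by auto
    show "inv \<tau> x < inv \<tau> y"
    proof (rule ccontr)
      assume "\<not> inv \<tau> x < inv \<tau> y"
      then have "f y \<le> f x" using fmono[OF xB yB] by auto
      with l invr show False by simp
    qed
  qed
  have decomp: "kendall n \<sigma>' \<tau> = kendall n \<sigma>' \<rho> + kendall n \<rho> \<tau>" if "\<sigma>' \<in> topk n k a" for \<sigma>'
    using core[OF that rR assms(5) agree] .
  have rS: "\<rho> \<in> Sn n" using rperm unfolding Sn_def by auto
  have "proj n (topk n k a) \<tau> = \<rho>"
    unfolding proj_def
  proof (rule the_equality)
    have "\<forall>\<rho>'\<in>topk n k a. kendall n \<rho> \<tau> \<le> kendall n \<rho>' \<tau>"
    proof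
      fix \<rho>' assume "\<rho>' \<in> topk n k a"
      from decomp[OF this] show "kendall n \<rho> \<tau> \<le> kendall n \<rho>' \<tau>" by linarith
    qed
    with rR show "\<rho> \<in> topk n k a \<and> (\<forall>\<rho>'\<in>topk n k a. kendall n \<rho> \<tau> \<le> kendall n \<rho>' \<tau>)"
      by (rule conjI)
    fix \<rho>' assume h: "\<rho>' \<in> topk n k a \<and> (\<forall>\<rho>''\<in>topk n k a. kendall n \<rho>' \<tau> \<le> kendall n \<rho>'' \<tau>)"
    then have h1: "\<rho>' \<in> topk n k a" and h2: "\<forall>\<rho>''\<in>topk n k a. kendall n \<rho>' \<tau> \<le> kendall n \<rho>'' \<tau>"
      by blast+
    have "kendall n \<rho>' \<tau> \<le> kendall n \<rho> \<tau>" using h2 rR by blast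
    moreover have "kendall n \<rho>' \<tau> = kendall n \<rho>' \<rho> + kendall n \<rho> \<tau>" by (rule decomp[OF h1])
    ultimately have "kendall n \<rho>' \<rho> = 0" by linarith
    moreover have "\<rho>' \<in> Sn n" using h1 unfolding topk_def by blast
    ultimately show "\<rho>' = \<rho>" using zero_eq[OF _ rS] by blast
  qed
  then show ?thesis using decomp[OF assms(4)] by simp
qed

end
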